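(* Let $\mu$ be a probability measure on $\mathbb{R}$ and let $x^\ast\in(-\infty,+\infty]$ be the right endpoint of $\mathrm{supp}(\mu)$. Then \[ \lim_{x\to x^\ast}\frac{-\log\mu([x,\infty))}{\Lambda_\mu^\ast(x)}=1 \] if and only if there exist $a<x^\ast$ and a convex function $V:(a,x^\ast)\to\mathbb{R}$ such that $\lim_{x\to x^\ast}\frac{-\log\mu([x,\infty))}{V(x)}=1$.
   Context: For $X\sim\mu$: $\Lambda_\mu(t)=\log\mathbb{E}e^{tX}$ and $\Lambda_\mu^\ast(x)=\sup_{t\in\mathbb{R}}(tx-\Lambda_\mu(t))$ is the Cramér transform of $\mu$. Limits $x\to x^\ast$ are taken from the left. *)

theory Defs
  imports "HOL-Probability.Probability"
begin

definition log_mgf :: "real measure \<Rightarrow> real \<Rightarrow> ereal" where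
  "log_mgf M t =
     (let I = (\<integral>\<^sup>+ y. ennreal (exp (t * y)) \<partial>M)
      in if I = \<infinity> then \<infinity> else ereal (ln (enn2real I)))"

definition cramer :: "real measure \<Rightarrow> real \<Rightarrow> ereal" where
  "cramer M x = (SUP t. ereal (t * x) - log_mgf M t)"

definition msupport :: "real measure \<Rightarrow> real set" where
  "msupport M = {x. \<forall>e>0. emeasure M (ball x e) > 0}"

definition right_end :: "real measure \<Rightarrow> ereal" where
  "right_end M = Sup (ereal ` msupport M)"

definition to_right_end :: "ereal \<Rightarrow> real filter" where
  "to_right_end xs = (if xs = \<infinity> then at_top else at_left (real_of_ereal xs))"

end

theory Submission
  imports Defs
begin

locale rm = prob_space M for M :: "real measure" + assumes sb: "sets M = sets borel"
begin

lemma sM[simp]: "A \<in> sets borel \<Longrightarrow> A \<in> sets M" by (simp add: sb)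
lemma spM[simp]: "space M = UNIV" using sets_eq_imp_space_eq[OF sb] by simp
lemma bmM: "f \<in> borel_measurable borel \<Longrightarrow> f \<in> borel_measurable M"
  using measurable_cong_sets[OF sb refl] by blast

lemma L1: assumes "ereal x < right_end M" shows "0 < measure M {x..}"
proof -
  obtain y where y: "y \<in> msupport M" "ereal x < ereal y"
    using assms unfolding right_end_def less_Sup_iff by auto
  hence "emeasure M (ball y (y-x)) > 0" unfolding msupport_def by auto
  moreover have "ball y (y-x) \<subseteq> {x..}" by (auto simp: dist_real_def)
  ultimately have "emeasure M {x..} > 0"
    by (metis emeasure_mono sM atLeast_borel order_less_le_trans)
  thus ?thesis by (simp add: emeasure_eq_measure)
qed

lemma L2: assumes "right_end M < ereal y" shows "measure M {y..} = 0"
proof (rule ccontr)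
  assume "measure M {y..} \<noteq> 0"
  hence ne: "emeasure M {y..} \<noteq> 0" by (simp add: emeasure_eq_measure)
  define S where "S = {z. y \<le> z \<and> measure M {y..z} > 0}"
  have "S \<noteq> {}"
  proof
    assume "S = {}"
    hence "\<forall>n::nat. emeasure M {y..y + real n} = 0"
      by (auto simp: S_def emeasure_eq_measure) (metis atLeastAtMost_iff le_add_same_cancel1 
           linorder_not_le measure_nonneg order_le_less of_nat_0_le_iff)
    hence "emeasure M (\<Union>n::nat. {y..y + real n}) = 0"
      by (intro emeasure_UN_eq_0) auto
    moreover have "(\<Union>n::nat. {y..y + real n}) = {y..}"
    proof (auto)
      fix z assume "y \<le> z"
      obtain n::nat where "z - y \<le> n" using real_arch_simple by blast
      thus "\<exists>n::nat. z \<le> y + n" by (intro exI[of _ n]) auto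
    qed
    ultimately show False using ne by simp
  qed
  have bdd: "bdd_below S" unfolding S_def bdd_below_def by auto
  define s where "s = Inf S"
  have sy: "y \<le> s" unfolding s_def using \<open>S \<noteq> {}\<close> by (intro cInf_greatest) (auto simp: S_def)
  have "s \<in> msupport M"
    unfolding msupport_def
  proof (intro CollectI allI impI)
    fix e :: real assume e: "e > 0"
    obtain z where z: "z \<in> S" "z < s + e/2"
      using cInf_less_iff[OF \<open>S \<noteq> {}\<close> bdd, of "s + e/2"] e unfolding s_def by auto
    have z0: "measure M {y..z} > 0" using z by (auto simp: S_def)
    have m0: "measure M {y..s - e/2} = 0"
    proof (cases "s - e/2 < y")
      case True thus ?thesis by simp
    next
      case False
      have "s - e/2 \<notin> S"
      proof
        assume "s - e/2 \<in> S"
        hence "s \<le> s - e/2" unfolding s_def by (intro cInf_lower bdd)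
        thus False using e by simp
      qed
      thus ?thesis using False by (auto simp: S_def) (meson measure_nonneg not_le order.antisym)
    qed
    have sub: "{y..z} \<subseteq> {y..s - e/2} \<union> ball s e" using z sy e by (auto simp: dist_real_def)
    have "measure M {y..z} \<le> measure M ({y..s - e/2} \<union> ball s e)"
      by (intro finite_measure_mono sub) auto
    also have "\<dots> \<le> measure M {y..s - e/2} + measure M (ball s e)"
      by (intro measure_Un_le) auto
    finally have "measure M (ball s e) > 0" using z0 m0 by simp
    thus "emeasure M (ball s e) > 0" by (simp add: emeasure_eq_measure)
  qed
  hence "ereal s \<le> right_end M" unfolding right_end_def by (intro Sup_upper) auto
  thus False using assms sy by (meson ereal_less_eq(3) not_le order.strict_trans2)
qed

lemma L3: "right_end M \<noteq> -\<infinity>"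
proof
  assume h: "right_end M = -\<infinity>"
  have "\<forall>n::nat. emeasure M {- real n..} = 0"
    using L2 h by (simp add: emeasure_eq_measure)
  hence "emeasure M (\<Union>n::nat. {- real n..}) = 0" by (intro emeasure_UN_eq_0) auto
  moreover have "(\<Union>n::nat. {- real n..}) = UNIV"
  proof auto
    fix z :: real
    obtain n::nat where "-z \<le> n" using real_arch_simple by blast
    thus "\<exists>n::nat. - real n \<le> z" by (intro exI[of _ n]) auto
  qed
  ultimately show False using emeasure_space_1 by simp
qed

abbreviation "F \<equiv> to_right_end (right_end M)"

lemma Fe1: assumes "eventually P F"
  shows "\<exists>b. ereal b < right_end M \<and> (\<forall>x. b < x \<longrightarrow> ereal x < right_end M \<longrightarrow> P x)"
proof (cases "right_end M")
  case (real u)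
  hence "eventually P (at_left u)" using assms by (simp add: to_right_end_def)
  then obtain b where "b < u" "\<forall>y>b. y < u \<longrightarrow> P y"
    using eventually_at_left[of "u - 1" u] by auto
  thus ?thesis using real by auto
next
  case PInf
  hence "eventually P at_top" using assms by (simp add: to_right_end_def)
  then obtain N where "\<forall>n\<ge>N. P n" by (auto simp: eventually_at_top_linorder)
  thus ?thesis using PInf by (intro exI[of _ N]) auto
qed (use L3 in auto)

lemma Fe2: assumes "ereal b < right_end M" "\<And>x. b < x \<Longrightarrow> ereal x < right_end M \<Longrightarrow> P x"
  shows "eventually P F"
proof (cases "right_end M")
  case (real u)
  thus ?thesis using assms
    by (simp add: to_right_end_def) (subst eventually_at_left[of b]; auto)
next
  case PInf
  thus ?thesis using assms by (auto simp: to_right_end_def eventually_at_top_dense)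
qed (use L3 in auto)

lemma Fnb: "F \<noteq> bot"
  by (cases "right_end M") (use L3 in \<open>auto simp: to_right_end_def\<close>)

lemma Flt: "eventually (\<lambda>x. ereal x < right_end M) F"
proof -
  obtain b where "ereal b < right_end M"
  proof (cases "right_end M")
    case (real r) thus ?thesis using that[of "r - 1"] by simp
  next
    case PInf thus ?thesis using that[of 0] by simp
  qed (use L3 in auto)
  thus ?thesis by (intro Fe2) auto
qed

lemma Fgt: "ereal b < right_end M \<Longrightarrow> eventually (\<lambda>x. b < x) F"
  by (intro Fe2) auto

end


context rm
begin

definition mgf :: "real \<Rightarrow> ennreal" where
  "mgf t = (\<integral>\<^sup>+ y. ennreal (exp (t * y)) \<partial>M)"

lemma mgf_pos: "0 < mgf t"
proof -
  have "mgf t \<noteq> 0"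
  proof
    assume "mgf t = 0"
    hence "AE y in M. ennreal (exp (t*y)) = 0" unfolding mgf_def
      by (subst (asm) nn_integral_0_iff_AE) (auto intro!: bmM)
    thus False by (simp add: AE_False)
  qed
  thus ?thesis by (simp add: order_less_le)
qed

lemma log_mgf_eq: "mgf t \<noteq> \<infinity> \<Longrightarrow> log_mgf M t = ereal (ln (enn2real (mgf t)))"
  unfolding log_mgf_def mgf_def[symmetric] by (simp add: Let_def)

lemma log_mgf_inf: "mgf t = \<infinity> \<Longrightarrow> log_mgf M t = \<infinity>"
  unfolding log_mgf_def mgf_def[symmetric] by (simp add: Let_def)

lemma mgf0: "mgf 0 = 1"
  unfolding mgf_def using emeasure_space_1 by simp

lemma cramer_ge: "ereal (t*x) - log_mgf M t \<le> cramer M x"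
  unfolding cramer_def by (rule SUP_upper) auto

lemma cramer_nonneg: "0 \<le> cramer M x"
proof -
  have "log_mgf M 0 = 0" using log_mgf_eq[of 0] mgf0 by simp
  thus ?thesis using cramer_ge[of 0 x] by (simp add: zero_ereal_def)
qed

lemma cram_ge: assumes "mgf t \<le> ennreal R" shows "ereal (t*x - ln R) \<le> cramer M x"
proof -
  have "0 < ennreal R" using mgf_pos[of t] assms by (rule less_le_trans)
  hence R: "R > 0" by simp
  have "mgf t < \<infinity>" by (rule le_less_trans[OF assms]) simp
  hence fin: "mgf t \<noteq> \<infinity>" by simp
  have "enn2real (mgf t) \<le> enn2real (ennreal R)"
    by (rule enn2real_mono[OF assms]) simp
  hence "enn2real (mgf t) \<le> R" using R by simp
  moreover have "enn2real (mgf t) > 0" using mgf_pos[of t] fin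
    by (simp add: enn2real_positive_iff top.not_eq_extremum)
  ultimately have "ln (enn2real (mgf t)) \<le> ln R" by simp
  hence "ereal (t*x - ln R) \<le> ereal (t*x) - log_mgf M t"
    using log_mgf_eq[OF fin] by simp
  thus ?thesis using cramer_ge order_trans by blast
qed

lemma term_le: assumes "ennreal R \<le> mgf t" "R > 0"
  shows "ereal (t*x) - log_mgf M t \<le> ereal (t*x - ln R)"
proof (cases "mgf t = \<infinity>")
  case True thus ?thesis using log_mgf_inf by simp
next
  case False
  have "enn2real (ennreal R) \<le> enn2real (mgf t)"
    by (rule enn2real_mono[OF assms(1)]) (use False in \<open>simp add: top.not_eq_extremum\<close>)
  hence "R \<le> enn2real (mgf t)" using assms by simp
  hence "ln R \<le> ln (enn2real (mgf t))" using assms by simp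
  thus ?thesis using log_mgf_eq[OF False] by simp
qed

lemma mgf_ge_set: assumes "A \<in> sets borel" "\<And>y. y \<in> A \<Longrightarrow> s \<le> t*y"
  shows "ennreal (exp s * measure M A) \<le> mgf t"
proof -
  have "ennreal (exp s * measure M A) = (\<integral>\<^sup>+ y. ennreal (exp s) * indicator A y \<partial>M)"
    using assms(1) by (simp add: nn_integral_cmult_indicator emeasure_eq_measure ennreal_mult)
  also have "\<dots> \<le> mgf t" unfolding mgf_def
    by (intro nn_integral_mono) (auto simp: indicator_def assms(2))
  finally show ?thesis .
qed

lemma term_le_set: assumes "A \<in> sets borel" "\<And>y. y \<in> A \<Longrightarrow> s \<le> t*y" "measure M A > 0"
  shows "ereal (t*x) - log_mgf M t \<le> ereal (t*x - s - ln (measure M A))"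
proof -
  have "ereal (t*x) - log_mgf M t \<le> ereal (t*x - ln (exp s * measure M A))"
    using assms by (intro term_le mgf_ge_set) auto
  also have "ln (exp s * measure M A) = s + ln (measure M A)" using assms(3) by (simp add: ln_mult)
  finally show ?thesis by (simp add: algebra_simps)
qed

end


context rm
begin

lemma ennreal_le_suminf: "(f k :: ennreal) \<le> (\<Sum>i. f i)"
  using sum_le_suminf[of f "{k}"] by (simp add: summableI)

lemma grid_mgf:
  assumes t: "t > 0" and c: "c > 0" and B: "B \<ge> 0"
    and h: "\<And>k::nat. exp (t*(z + real k/t)) * measure M {z + real k/t..} \<le> B * exp(-c*real k)"
  shows "mgf t \<le> ennreal (exp(t*z) + exp 1 * B / (1 - exp(-c)))"
proof -
  define y where "y k = z + real k / t" for k :: nat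
  define g where "g k w = ennreal (exp (t * y (Suc k))) * indicator {y k..<y (Suc k)} w" for k w
  have ty: "t * y (Suc k) = t * y k + 1" for k unfolding y_def using t by (simp add: field_simps)
  have pw: "ennreal (exp (t*w)) \<le> ennreal (exp (t*z)) * indicator {..<z} w + (\<Sum>k. g k w)" for w
  proof (cases "w < z")
    case True
    hence "exp (t*w) \<le> exp (t*z)" using t by simp
    thus ?thesis using True by (simp add: add_increasing2)
  next
    case False
    define k where "k = nat \<lfloor>t*(w - z)\<rfloor>"
    have "0 \<le> t*(w-z)" using False t by simp
    hence k1: "real k \<le> t*(w - z)" and k2: "t*(w - z) < real k + 1" unfolding k_def
      by (simp_all add: of_nat_nat)
    have "y k \<le> w" using k1 t unfolding y_def by (simp add: field_simps)
    moreover have "w < y (Suc k)" using k2 t unfolding y_def by (simp add: field_simps)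
    ultimately have "g k w = ennreal (exp (t * y (Suc k)))" unfolding g_def by simp
    moreover have "exp (t*w) \<le> exp (t * y (Suc k))" using \<open>w < y (Suc k)\<close> t by simp
    ultimately have "ennreal (exp (t*w)) \<le> g k w" by simp
    also have "\<dots> \<le> (\<Sum>k. g k w)" by (rule ennreal_le_suminf)
    finally show ?thesis by (simp add: add_increasing)
  qed
  have mg: "g k \<in> borel_measurable M" for k unfolding g_def by (intro bmM) measurable
  have "mgf t \<le> (\<integral>\<^sup>+ w. ennreal (exp (t*z)) * indicator {..<z} w + (\<Sum>k. g k w) \<partial>M)"
    unfolding mgf_def by (intro nn_integral_mono pw)
  also have "\<dots> = (\<integral>\<^sup>+ w. ennreal (exp (t*z)) * indicator {..<z} w \<partial>M) + (\<integral>\<^sup>+ w. (\<Sum>k. g k w) \<partial>M)"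
    using mg by (intro nn_integral_add) (auto intro!: bmM)
  also have "(\<integral>\<^sup>+ w. (\<Sum>k. g k w) \<partial>M) = (\<Sum>k. \<integral>\<^sup>+ w. g k w \<partial>M)"
    using mg by (intro nn_integral_suminf) auto
  also have "(\<integral>\<^sup>+ w. ennreal (exp (t*z)) * indicator {..<z} w \<partial>M) = ennreal (exp (t*z)) * emeasure M {..<z}"
    by (intro nn_integral_cmult_indicator) simp
  also have "\<dots> \<le> ennreal (exp (t*z))"
    by (metis emeasure_le_1 mult.comm_neutral mult_left_mono zero_le)
  also have "(\<Sum>k. \<integral>\<^sup>+ w. g k w \<partial>M) \<le> (\<Sum>k. ennreal (exp 1 * B * exp (-c) ^ k))"
  proof (intro suminf_le summableI allI)
    fix k
    have "(\<integral>\<^sup>+ w. g k w \<partial>M) = ennreal (exp (t * y (Suc k))) * emeasure M {y k..<y (Suc k)}"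
      unfolding g_def by (intro nn_integral_cmult_indicator) simp
    also have "\<dots> \<le> ennreal (exp (t * y (Suc k))) * emeasure M {y k..}"
      by (intro mult_left_mono emeasure_mono) auto
    also have "\<dots> = ennreal (exp 1 * (exp (t * y k) * measure M {y k..}))"
      by (simp add: emeasure_eq_measure ennreal_mult'[symmetric] ty exp_add mult.assoc mult.commute)
    also have "\<dots> \<le> ennreal (exp 1 * (B * exp (-c * real k)))"
      using h[of k] unfolding y_def by (intro ennreal_leI mult_left_mono) auto
    also have "exp (-c * real k) = exp (-c) ^ k" by (simp add: exp_of_nat_mult[symmetric] mult.commute)
    finally show "(\<integral>\<^sup>+ w. g k w \<partial>M) \<le> ennreal (exp 1 * B * exp (-c) ^ k)" by (simp add: mult.assoc)
  qed
  also have "(\<Sum>k. ennreal (exp 1 * B * exp (-c) ^ k)) = ennreal (\<Sum>k. exp 1 * B * exp (-c) ^ k)"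
    using c B by (intro suminf_ennreal2 summable_mult summable_geometric) auto
  also have "(\<Sum>k. exp 1 * B * exp (-c) ^ k) = exp 1 * B / (1 - exp (-c))"
  proof -
    have g: "norm (exp (-c)) < 1" using c by simp
    have "(\<Sum>k. exp 1 * B * exp (-c) ^ k) = exp 1 * B * (\<Sum>k. exp (-c) ^ k)"
      by (rule suminf_mult[OF summable_geometric[OF g]])
    also have "(\<Sum>k. exp (-c) ^ k) = 1 / (1 - exp (-c))" by (rule suminf_geometric[OF g])
    finally show ?thesis by simp
  qed
  finally have "mgf t \<le> ennreal (exp (t*z)) + ennreal (exp 1 * B / (1 - exp (-c)))"
    by (auto intro: add_mono)
  also have "\<dots> = ennreal (exp(t*z) + exp 1 * B / (1 - exp(-c)))"
  proof (rule ennreal_plus[symmetric])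
    have "exp (-c) < 1" using c by simp
    thus "0 \<le> exp 1 * B / (1 - exp(-c))" using B by simp
  qed simp
  finally show ?thesis .
qed

end


context rm
begin

lemma eU[simp]: "emeasure M UNIV = 1" using emeasure_space_1 by simp

definition I :: "real \<Rightarrow> real" where "I x = - ln (measure M {x..})"

lemma upper_gen:
  assumes m: "measure M {x..} > 0" and G: "\<And>t. t < 0 \<Longrightarrow> ereal (t*x) - log_mgf M t \<le> ereal G"
  shows "cramer M x \<le> ereal (max (I x) G)"
  unfolding cramer_def
proof (rule SUP_least)
  fix t :: real
  show "ereal (t*x) - log_mgf M t \<le> ereal (max (I x) G)"
  proof (cases "t < 0")
    case True thus ?thesis using G[OF True] by (meson ereal_less_eq(3) max.cobounded2 order_trans)
  next
    case False
    have "ereal (t*x) - log_mgf M t \<le> ereal (t*x - t*x - ln (measure M {x..}))"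
      using False m by (intro term_le_set) (auto intro: mult_left_mono)
    also have "\<dots> \<le> ereal (max (I x) G)" by (simp add: I_def)
    finally show ?thesis .
  qed
qed

lemma upper_B:
  assumes "c \<le> x" "measure M {..c} > 0" "t < 0"
  shows "ereal (t*x) - log_mgf M t \<le> ereal (- ln (measure M {..c}))"
proof -
  have "ereal (t*x) - log_mgf M t \<le> ereal (t*x - t*c - ln (measure M {..c}))"
    using assms by (intro term_le_set) (auto intro: mult_left_mono_neg)
  moreover have "t*x - t*c - ln (measure M {..c}) \<le> - ln (measure M {..c})"
    using assms mult_left_mono_neg[of c x t] by simp
  ultimately show ?thesis using ereal_less_eq(3) order_trans by blast
qed

lemma AE_le_u: assumes "right_end M = ereal u" shows "AE y in M. y \<le> u"
proof -
  have "emeasure M (\<Union>n::nat. {u + 1/(Suc n)..}) = 0"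
    using L2 assms by (intro emeasure_UN_eq_0) (auto simp: emeasure_eq_measure)
  moreover have "(\<Union>n::nat. {u + 1/(Suc n)..}) = {u<..}"
  proof auto
    fix w assume "u < w"
    then obtain n where n: "inverse (real (Suc n)) < w - u" using reals_Archimedean[of "w - u"] by auto
    have "u + 1 / (1 + real n) \<le> w" using n by (simp add: inverse_eq_divide)
    thus "\<exists>n. u + 1 / (1 + real n) \<le> w" by blast
  next
    fix n :: nat and w assume "u + 1 / (1 + real n) \<le> w"
    moreover have "0 < 1 / (1 + real n)" by simp
    ultimately show "u < w" by linarith
  qed
  ultimately have "emeasure M {u<..} = 0" by simp
  hence "AE y in M. y \<notin> {u<..}" by (intro AE_I'[of "{u<..}"]) auto
  thus ?thesis by (auto simp: not_less)
qed

lemma meas_le_u: assumes "right_end M = ereal u" shows "measure M {..u} = 1"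
  using AE_le_u[OF assms] by (subst AE_in_set_eq_1[symmetric]) auto

lemma upper_A:
  assumes u: "right_end M = ereal u" and cx: "c < x" "x < u" and m: "measure M {..c} > 0"
    and I0: "I0 > 0" and ineq: "- ln (measure M {..c}) * (u-x) \<le> I0*(x-c)" and t: "t < 0"
  shows "ereal (t*x) - log_mgf M t \<le> ereal I0"
proof -
  define L where "L = - ln (measure M {..c})"
  have b1: "ereal (t*x) - log_mgf M t \<le> ereal (t*x - t*u - ln (measure M {..u}))"
    using t by (intro term_le_set) (auto intro: mult_left_mono_neg simp: meas_le_u[OF u])
  have b2: "ereal (t*x) - log_mgf M t \<le> ereal (t*x - t*c - ln (measure M {..c}))"
    using t m by (intro term_le_set) (auto intro: mult_left_mono_neg)
  show ?thesis
  proof (cases "(-t)*(u-x) \<le> I0")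
    case True
    have "t*x - t*u - ln (measure M {..u}) = (-t)*(u-x)" by (simp add: meas_le_u[OF u] algebra_simps)
    thus ?thesis using b1 True by (metis ereal_less_eq(3) order_trans)
  next
    case False
    have "I0*(x-c) < (-t)*(u-x)*(x-c)" using False cx by (intro mult_strict_right_mono) auto
    hence "L*(u-x) < ((-t)*(x-c))*(u-x)" using ineq unfolding L_def by (simp add: algebra_simps)
    hence "L < (-t)*(x-c)" by (rule mult_right_less_imp_less) (use cx in simp)
    hence "t*x - t*c - ln (measure M {..c}) \<le> I0" using I0 unfolding L_def by (simp add: algebra_simps)
    thus ?thesis using b2 by (metis ereal_less_eq(3) order_trans)
  qed
qed

lemma mgf_A: assumes u: "right_end M = ereal u" and t: "t > 0" and d: "d > 0"
  shows "mgf t \<le> ennreal (exp (t*u) * (exp (-t*d) + measure M {u-d..}))"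
proof -
  have "mgf t \<le> (\<integral>\<^sup>+ y. ennreal (exp (t*(u-d))) + ennreal (exp (t*u)) * indicator {u-d..} y \<partial>M)"
    unfolding mgf_def
  proof (rule nn_integral_mono_AE)
    show "AE y in M. ennreal (exp (t*y)) \<le> ennreal (exp (t*(u-d))) + ennreal (exp (t*u)) * indicator {u-d..} y"
      using AE_le_u[OF u]
    proof eventually_elim
      case (elim y)
      show ?case
      proof (cases "u - d \<le> y")
        case True
        hence "exp (t*y) \<le> exp (t*u)" using elim t by simp
        thus ?thesis using True by (simp add: add_increasing)
      next
        case False
        hence "exp (t*y) \<le> exp (t*(u-d))" using t by simp
        thus ?thesis by (simp add: add_increasing2)
      qed
    qed
  qed
  also have "\<dots> = ennreal (exp (t*(u-d))) + ennreal (exp (t*u)) * emeasure M {u-d..}"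
    by (subst nn_integral_add) (auto intro!: bmM simp: nn_integral_cmult_indicator emeasure_space_1)
  also have "\<dots> = ennreal (exp (t*u) * (exp (-t*d) + measure M {u-d..}))"
    by (simp add: emeasure_eq_measure ennreal_mult'[symmetric] ennreal_plus[symmetric]
        distrib_left exp_add[symmetric] algebra_simps del: ennreal_plus)
  finally show ?thesis .
qed

end


lemma subgrad:
  fixes f :: "real \<Rightarrow> real"
  assumes f: "convex_on S f" and x: "x \<in> S" and l: "l \<in> S" "l < x" and r: "r \<in> S" "x < r"
  shows "\<exists>\<sigma>. \<forall>y\<in>S. f x + \<sigma>*(y-x) \<le> f y"
proof -
  have key: "(f x - f y)/(x - y) \<le> (f w - f x)/(w - x)" if "y \<in> S" "y < x" "w \<in> S" "x < w" for y w
  proof -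
    have "(f y - f x) / (y - x) \<le> (f y - f w) / (y - w)"
      using convex_on_slope_le(1)[OF f that(1) that(3)] that by simp
    also have "\<dots> \<le> (f x - f w) / (x - w)"
      using convex_on_slope_le(2)[OF f that(1) that(3)] that by simp
    finally have "(f y - f x) / (y - x) \<le> (f x - f w) / (x - w)" .
    moreover have "(f y - f x) / (y - x) = (f x - f y) / (x - y)"
      by (metis minus_diff_eq minus_divide_divide)
    moreover have "(f x - f w) / (x - w) = (f w - f x) / (w - x)"
      by (metis minus_diff_eq minus_divide_divide)
    ultimately show ?thesis by simp
  qed
  define L where "L = {(f x - f y)/(x - y) | y. y \<in> S \<and> y < x}"
  have ne: "L \<noteq> {}" using l unfolding L_def by auto
  have bdd: "bdd_above L" unfolding L_def bdd_above_def using key[OF _ _ r] by auto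
  define \<sigma> where "\<sigma> = Sup L"
  have "f x + \<sigma>*(y-x) \<le> f y" if y: "y \<in> S" for y
  proof (cases y x rule: linorder_cases)
    case less
    have "(f x - f y)/(x - y) \<le> \<sigma>" unfolding \<sigma>_def using y less by (intro cSup_upper bdd) (auto simp: L_def)
    hence "f x - f y \<le> \<sigma> * (x - y)" using less by (simp add: divide_le_eq)
    thus ?thesis by (simp add: algebra_simps)
  next
    case greater
    have "\<sigma> \<le> (f y - f x)/(y - x)" unfolding \<sigma>_def using key[OF _ _ y greater]
      by (intro cSup_least ne) (auto simp: L_def)
    hence "\<sigma> * (y - x) \<le> f y - f x" using greater by (simp add: le_divide_eq)
    thus ?thesis by (simp add: algebra_simps)
  qed simp
  thus ?thesis by blast
qed

context rm
begin

lemma ex_between: "ereal x < right_end M \<Longrightarrow> \<exists>r>x. ereal r < right_end M"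
proof -
  assume "ereal x < right_end M"
  then obtain r where "ereal x < ereal r" "ereal r < right_end M" using ereal_dense2 by blast
  thus ?thesis by auto
qed

lemma I_mono: assumes "c \<le> x" "ereal x < right_end M" shows "I c \<le> I x"
proof -
  have "measure M {x..} \<le> measure M {c..}" using assms by (intro finite_measure_mono) auto
  thus ?thesis using L1[OF assms(2)] unfolding I_def by simp
qed

lemma I_eq: "ereal x < right_end M \<Longrightarrow> measure M {x..} = exp (- I x)"
  using L1 unfolding I_def by simp

lemma lowerB:
  fixes W :: "real \<Rightarrow> real"
  assumes sub: "\<And>y. b < y \<Longrightarrow> ereal y < right_end M \<Longrightarrow> W x + \<sigma>*(y-x) \<le> W y"
    and tail: "\<And>y. b < y \<Longrightarrow> ereal y < right_end M \<Longrightarrow> measure M {y..} \<le> exp (- W y)"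
    and beyond: "\<And>y. right_end M \<le> ereal y \<Longrightarrow> measure M {y..} = 0"
    and bb: "b < b0" "b0 < x" "ereal x < right_end M" and sg: "\<sigma> > 0" and eta: "0 < \<eta>" "\<eta> < 1"
  shows "ereal ((1-\<eta>)*W x - ln (exp ((1-\<eta>)*W b0) + exp 1 * exp (-\<eta>*W b0) / (1 - exp (-(\<eta>/(1-\<eta>))))))
          \<le> cramer M x"
proof -
  define t where "t = (1-\<eta>)*\<sigma>"
  define c where "c = \<eta>/(1-\<eta>)"
  define z where "z = x - (W x - W b0)/\<sigma>"
  define B where "B = exp (t*x - W x + \<eta>*(W x - W b0))"
  have t: "t > 0" unfolding t_def using sg eta by simp
  have c: "c > 0" unfolding c_def using eta by simp
  have b0S: "ereal b0 < right_end M" using bb by (meson ereal_less_eq(3) less_imp_le order_le_less_trans)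
  have "W x + \<sigma>*(b0-x) \<le> W b0" using sub[of b0] bb b0S by simp
  hence "W x - W b0 \<le> \<sigma>*(x - b0)" by (simp add: algebra_simps)
  hence "(W x - W b0)/\<sigma> \<le> x - b0" using sg by (simp add: divide_le_eq mult.commute)
  hence zb0: "b0 \<le> z" unfolding z_def by simp
  have ct: "c * t = \<eta> * \<sigma>" unfolding c_def t_def using eta by simp
  have grid: "exp (t*(z + real k/t)) * measure M {z + real k/t..} \<le> B * exp(-c*real k)" for k :: nat
  proof (cases "ereal (z + real k/t) < right_end M")
    case False
    hence "measure M {z + real k/t..} = 0" by (intro beyond) simp
    thus ?thesis unfolding B_def by simp
  next
    case True
    define y where "y = z + real k/t"
    have by': "b < y" unfolding y_def using bb zb0 t by (smt (verit) divide_nonneg_pos of_nat_0_le_iff)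
    have "exp (t*y) * measure M {y..} \<le> exp (t*y) * exp (- W y)"
      using tail[OF by'] True unfolding y_def by simp
    also have "\<dots> = exp (t*y - W y)" by (simp add: exp_diff exp_minus divide_inverse)
    also have "\<dots> \<le> exp (t*y - W x - \<sigma>*(y-x))" using sub[OF by'] True unfolding y_def by simp
    also have "t*y - W x - \<sigma>*(y-x) = t*x - W x + \<eta>*(W x - W b0) - c*real k"
    proof -
      have "t*y - W x - \<sigma>*(y-x) = t*x - W x - \<eta>*\<sigma>*(y - x)" unfolding t_def by (simp add: algebra_simps)
      also have "\<eta>*\<sigma>*(y - x) = \<eta>*\<sigma>*(real k/t) - \<eta>*(W x - W b0)"
      proof -
        have yx: "y - x = real k/t - (W x - W b0)/\<sigma>" unfolding y_def z_def by simp
        have "\<eta>*\<sigma>*(y - x) = \<eta>*\<sigma>*(real k/t) - \<eta>*(\<sigma>*((W x - W b0)/\<sigma>))"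
          unfolding yx by (simp add: algebra_simps)
        also have "\<sigma>*((W x - W b0)/\<sigma>) = W x - W b0" using sg by simp
        finally show ?thesis .
      qed
      also have "\<eta>*\<sigma>*(real k/t) = c*real k" using ct t by (simp add: field_simps)
      finally show ?thesis by simp
    qed
    also have "exp (t*x - W x + \<eta>*(W x - W b0) - c*real k) = B * exp(-c*real k)"
      unfolding B_def by (simp add: exp_diff exp_minus divide_inverse)
    finally show ?thesis unfolding y_def .
  qed
  have mg: "mgf t \<le> ennreal (exp(t*z) + exp 1 * B / (1 - exp(-c)))"
    by (rule grid_mgf[OF t c _ grid]) (simp add: B_def)
  define K where "K = exp ((1-\<eta>)*W b0) + exp 1 * exp (-\<eta>*W b0) / (1 - exp (-c))"
  have Kp: "K > 0" unfolding K_def using c by (intro add_pos_nonneg) auto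
  have tz: "t*z = (t*x - (1-\<eta>)*W x) + (1-\<eta>)*W b0" unfolding t_def z_def using sg by (simp add: field_simps)
  have "exp(t*z) + exp 1 * B / (1 - exp(-c)) = exp (t*x - (1-\<eta>)*W x) * K"
    unfolding K_def B_def tz by (simp add: exp_add[symmetric] distrib_left algebra_simps)
  hence "ereal (t*x - ln (exp (t*x - (1-\<eta>)*W x) * K)) \<le> cramer M x" using cram_ge[OF mg] by simp
  also have "t*x - ln (exp (t*x - (1-\<eta>)*W x) * K) = (1-\<eta>)*W x - ln K" using Kp by (simp add: ln_mult)
  finally show ?thesis unfolding K_def c_def .
qed

end


lemma convexS: "convex {x::real. ereal b < ereal x \<and> ereal x < e}"
  unfolding convex_alt
proof (intro ballI allI impI)
  fix x y u :: real
  assume hx: "x \<in> {x::real. ereal b < ereal x \<and> ereal x < e}" and hy: "y \<in> {x::real. ereal b < ereal x \<and> ereal x < e}"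
    and hu: "0 \<le> u \<and> u \<le> 1"
  have h: "b < x" "ereal x < e" "b < y" "ereal y < e" "0 \<le> u" "u \<le> 1" using hx hy hu by auto
  have "(1-u)*min x y + u*min x y \<le> (1-u)*x + u*y"
    using h by (intro add_mono mult_left_mono) auto
  hence lo: "min x y \<le> (1-u)*x + u*y" by (simp add: algebra_simps)
  have "(1-u)*x + u*y \<le> (1-u)*max x y + u*max x y"
    using h by (intro add_mono mult_left_mono) auto
  hence hi: "(1-u)*x + u*y \<le> max x y" by (simp add: algebra_simps)
  have 1: "b < (1-u)*x + u*y" using lo h by linarith
  have 2: "ereal ((1-u)*x + u*y) < e"
  proof (cases "x \<le> y")
    case True
    hence "ereal ((1-u)*x + u*y) \<le> ereal y" using hi by (simp add: max_def)
    thus ?thesis using h(4) by (rule le_less_trans)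
  next
    case False
    hence "ereal ((1-u)*x + u*y) \<le> ereal x" using hi by (simp add: max_def)
    thus ?thesis using h(2) by (rule le_less_trans)
  qed
  show "(1 - u) *\<^sub>R x + u *\<^sub>R y \<in> {x::real. ereal b < ereal x \<and> ereal x < e}"
    using 1 2 by simp
qed

context rm
begin

lemma I_nonneg: "ereal x < right_end M \<Longrightarrow> 0 \<le> I x"
  using L1[of x] unfolding I_def by (simp add: ln_le_zero_iff)

lemma fin_lem:
  assumes "ereal (1/2) < ereal r / C" "ereal r / C < ereal 2" "0 \<le> C"
  shows "\<exists>v>0. C = ereal v"
proof (cases C)
  case (real v)
  have "v \<noteq> 0"
  proof
    assume "v = 0"
    hence "ereal r / C = ereal r * \<infinity>" using real by simp
    thus False using assms(1,2) by (cases "r > 0"; cases "r = 0") auto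
  qed
  thus ?thesis using real assms(3) by auto
qed (use assms in auto)

lemma dir1:
  assumes h: "((\<lambda>x. ereal (I x) / cramer M x) \<longlongrightarrow> ereal 1) F"
  shows "\<exists>a::real. \<exists>V::real \<Rightarrow> real. ereal a < right_end M \<and>
            convex_on {x. ereal a < ereal x \<and> ereal x < right_end M} V \<and>
            ((\<lambda>x. I x / V x) \<longlongrightarrow> 1) F"
proof -
  have "eventually (\<lambda>x. ereal (1/2) < ereal (I x) / cramer M x) F"
    by (rule order_tendstoD(1)[OF h]) simp
  moreover have "eventually (\<lambda>x. ereal (I x) / cramer M x < ereal 2) F"
    by (rule order_tendstoD(2)[OF h]) simp
  ultimately have "eventually (\<lambda>x. \<exists>v>0. cramer M x = ereal v) F"
    by eventually_elim (use fin_lem cramer_nonneg in blast)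
  then obtain b where b: "ereal b < right_end M"
    and bv: "\<And>x. b < x \<Longrightarrow> ereal x < right_end M \<Longrightarrow> \<exists>v>0. cramer M x = ereal v"
    using Fe1 by blast
  define S where "S = {x. ereal b < ereal x \<and> ereal x < right_end M}"
  define V where "V x = real_of_ereal (cramer M x)" for x
  have cV: "x \<in> S \<Longrightarrow> cramer M x = ereal (V x) \<and> V x > 0" for x
    using bv[of x] unfolding S_def V_def by auto
  have conv: "convex_on S V"
  proof (rule convex_onI)
    show "convex S" unfolding S_def by (rule convexS)
  next
    fix s x y :: real assume s: "0 < s" "s < 1" and xy: "x \<in> S" "y \<in> S"
    define z where "z = (1 - s) *\<^sub>R x + s *\<^sub>R y"
    have zS: "z \<in> S" using convexS[of b "right_end M"] xy s unfolding S_def z_def convex_alt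
      by (metis (no_types, lifting) less_eq_real_def mem_Collect_eq)
    have "cramer M z \<le> ereal ((1 - s) * V x + s * V y)"
      unfolding cramer_def
    proof (rule SUP_least)
      fix t :: real
      show "ereal (t*z) - log_mgf M t \<le> ereal ((1 - s) * V x + s * V y)"
      proof (cases "mgf t = \<infinity>")
        case True thus ?thesis using log_mgf_inf by simp
      next
        case False
        define l where "l = ln (enn2real (mgf t))"
        have L: "log_mgf M t = ereal l" using log_mgf_eq[OF False] l_def by simp
        have "ereal (t*x) - ereal l \<le> ereal (V x)" using cramer_ge[of t x] cV[OF xy(1)] L by simp
        hence 1: "t*x - l \<le> V x" by simp
        have "ereal (t*y) - ereal l \<le> ereal (V y)" using cramer_ge[of t y] cV[OF xy(2)] L by simp
        hence 2: "t*y - l \<le> V y" by simp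
        have "t*z - l = (1-s)*(t*x - l) + s*(t*y - l)" unfolding z_def by (simp add: algebra_simps)
        also have "\<dots> \<le> (1-s)*V x + s*V y" using 1 2 s by (intro add_mono mult_left_mono) auto
        finally show ?thesis using L by simp
      qed
    qed
    thus "V ((1 - s) *\<^sub>R x + s *\<^sub>R y) \<le> (1 - s) * V x + s * V y"
      using cV[OF zS] unfolding z_def by simp
  qed
  have "eventually (\<lambda>x. ereal (I x) / cramer M x = ereal (I x / V x)) F"
  proof (rule Fe2[OF b])
    fix x assume "b < x" "ereal x < right_end M"
    hence "cramer M x = ereal (V x)" "V x > 0" using cV[of x] by (auto simp: S_def)
    thus "ereal (I x) / cramer M x = ereal (I x / V x)" by simp
  qed
  hence "((\<lambda>x. ereal (I x / V x)) \<longlongrightarrow> ereal 1) F" using h tendsto_cong by fastforce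
  hence "((\<lambda>x. I x / V x) \<longlongrightarrow> 1) F" by simp
  thus ?thesis using b conv unfolding S_def by blast
qed

lemma conv_lim:
  assumes ev: "\<And>e. 0 < e \<Longrightarrow> e < 1 \<Longrightarrow> eventually (\<lambda>x. 0 < I x \<and> ereal ((1-e)*I x) \<le> cramer M x
              \<and> cramer M x \<le> ereal ((1+e)*I x)) F"
  shows "((\<lambda>x. ereal (I x) / cramer M x) \<longlongrightarrow> ereal 1) F"
proof -
  define f where "f x = real_of_ereal (cramer M x)" for x
  have pt: "cramer M x = ereal (f x) \<and> (1-e)*I x \<le> f x \<and> f x \<le> (1+e)*I x"
    if h: "ereal ((1-e)*I x) \<le> cramer M x" "cramer M x \<le> ereal ((1+e)*I x)" for x e
  proof -
    obtain v where "cramer M x = ereal v" using h by (cases "cramer M x") auto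
    thus ?thesis using h unfolding f_def by simp
  qed
  have "((\<lambda>x. f x / I x) \<longlongrightarrow> 1) F"
  proof (rule tendstoI)
    fix \<epsilon> :: real assume \<epsilon>: "\<epsilon> > 0"
    define e where "e = min (\<epsilon>/2) (1/2)"
    have e: "0 < e" "e < 1" "e < \<epsilon>" unfolding e_def using \<epsilon> by auto
    show "eventually (\<lambda>x. dist (f x / I x) 1 < \<epsilon>) F"
      using ev[OF e(1,2)]
    proof eventually_elim
      case (elim x)
      hence I: "I x > 0" and b: "(1-e)*I x \<le> f x" "f x \<le> (1+e)*I x" using pt by auto
      have "\<bar>f x - I x\<bar> \<le> e * I x" using b by (simp add: algebra_simps)
      hence "\<bar>f x / I x - 1\<bar> \<le> e" using I by (simp add: field_simps abs_divide)
      thus ?case using e by (simp add: dist_real_def)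
    qed
  qed
  hence "((\<lambda>x. inverse (f x / I x)) \<longlongrightarrow> inverse 1) F" by (intro tendsto_inverse) auto
  hence lim: "((\<lambda>x. I x / f x) \<longlongrightarrow> 1) F" by simp
  have "eventually (\<lambda>x. 0 < I x \<and> ereal ((1-1/2)*I x) \<le> cramer M x
              \<and> cramer M x \<le> ereal ((1+1/2)*I x)) F"
    by (rule ev) auto
  hence "eventually (\<lambda>x. ereal (I x) / cramer M x = ereal (I x / f x)) F"
  proof eventually_elim
    case (elim x)
    hence "cramer M x = ereal (f x)" "f x > 0" using pt[of "1/2" x] by auto
    thus ?case by simp
  qed
  thus ?thesis using lim tendsto_cong by fastforce
qed

lemma ev_IV:
  assumes h: "((\<lambda>x. I x / V x) \<longlongrightarrow> 1) F" and d: "0 < \<delta>" "\<delta> < 1"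
  shows "eventually (\<lambda>x. ereal x < right_end M \<and> 0 < V x \<and> (1-\<delta>)*V x \<le> I x \<and> I x \<le> (1+\<delta>)*V x \<and> 0 < I x) F"
proof -
  have "eventually (\<lambda>x. 1 - \<delta> < I x / V x) F" by (rule order_tendstoD(1)[OF h]) (use d in simp)
  moreover have "eventually (\<lambda>x. I x / V x < 1 + \<delta>) F" by (rule order_tendstoD(2)[OF h]) (use d in simp)
  ultimately show ?thesis using Flt
  proof eventually_elim
    case (elim x)
    have I0: "0 \<le> I x" using I_nonneg elim by simp
    have V: "0 < V x"
    proof (rule ccontr)
      assume "\<not> 0 < V x"
      hence "I x / V x \<le> 0" using I0 by (simp add: divide_nonneg_nonpos)
      thus False using elim d by simp
    qed
    have "(1-\<delta>)*V x < I x" using elim V by (simp add: less_divide_eq)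
    moreover have "I x < (1+\<delta>)*V x" using elim V by (simp add: divide_less_eq)
    moreover have "0 < (1-\<delta>)*V x" using V d by simp
    ultimately show ?case using elim V by auto
  qed
qed

end


context rm
begin

lemma caseB_beyond: assumes fl: "filterlim I at_top F" and y: "right_end M \<le> ereal y"
  shows "measure M {y..} = 0"
proof (rule ccontr)
  define m where "m = measure M {y..}"
  assume "measure M {y..} \<noteq> 0"
  hence m: "m > 0" unfolding m_def by (simp add: zero_less_measure_iff)
  have "eventually (\<lambda>x. - ln (m/2) \<le> I x \<and> ereal x < right_end M) F"
    using fl Flt unfolding filterlim_at_top by (intro eventually_conj) auto
  then obtain x where x: "- ln (m/2) \<le> I x" "ereal x < right_end M"
    using eventually_happens'[OF Fnb] by blast
  have "x \<le> y" using x y by (meson ereal_less_eq(3) less_le_not_le order.trans)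
  hence "m \<le> measure M {x..}" unfolding m_def by (intro finite_measure_mono) auto
  also have "\<dots> = exp (- I x)" using I_eq x by simp
  also have "\<dots> \<le> exp (ln (m/2))" using x by simp
  also have "\<dots> = m/2" using m by simp
  finally show False using m by simp
qed

lemma ex_c: assumes "eventually (\<lambda>x. ereal x < right_end M \<and> 0 < I x) F"
  shows "\<exists>c. ereal c < right_end M \<and> measure M {..c} > 0 \<and> 0 < I c"
proof -
  obtain c where c: "ereal c < right_end M" "0 < I c" using eventually_happens'[OF Fnb assms] by blast
  have "measure M {c..} < 1" using I_eq[OF c(1)] c(2) by simp
  moreover have "measure M {..<c} = 1 - measure M {c..}"
  proof -
    have "measure M (space M - {c..}) = 1 - measure M {c..}" by (rule prob_compl) simp
    moreover have "space M - {c..} = {..<c}" by auto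
    ultimately show ?thesis by simp
  qed
  moreover have "measure M {..<c} \<le> measure M {..c}" by (intro finite_measure_mono) auto
  ultimately show ?thesis using c by (intro exI[of _ c]) auto
qed

lemma caseB_upper: assumes fl: "filterlim I at_top F" and c: "measure M {..c} > 0" "ereal c < right_end M"
  shows "eventually (\<lambda>x. cramer M x \<le> ereal (I x)) F"
proof -
  have "eventually (\<lambda>x. - ln (measure M {..c}) \<le> I x) F" using fl unfolding filterlim_at_top by auto
  with Fgt[OF c(2)] Flt show ?thesis
  proof eventually_elim
    case (elim x)
    have "cramer M x \<le> ereal (max (I x) (- ln (measure M {..c})))"
      using elim c by (intro upper_gen L1 upper_B) auto
    thus ?case using elim by simp
  qed
qed

lemma caseB_lower:
  assumes fl: "filterlim I at_top F" and a: "ereal a < right_end M"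
    and conv: "convex_on {x. ereal a < ereal x \<and> ereal x < right_end M} V"
    and h: "((\<lambda>x. I x / V x) \<longlongrightarrow> 1) F" and e: "0 < e" "e < 1"
  shows "eventually (\<lambda>x. ereal ((1-e)*I x) \<le> cramer M x) F"
proof -
  define S where "S = {x. ereal a < ereal x \<and> ereal x < right_end M}"
  define \<eta> where "\<eta> = e/4"
  have \<eta>: "0 < \<eta>" "\<eta> < 1" unfolding \<eta>_def using e by auto
  have evd: "eventually (\<lambda>x. ereal x < right_end M \<and> 0 < V x \<and> (1-\<eta>)*V x \<le> I x \<and> I x \<le> (1+\<eta>)*V x \<and> 0 < I x) F"
    by (rule ev_IV[OF h \<eta>])
  obtain b where b: "ereal b < right_end M"
    and bP: "\<And>x. b < x \<Longrightarrow> ereal x < right_end M \<Longrightarrow> 0 < V x \<and> (1-\<eta>)*V x \<le> I x \<and> I x \<le> (1+\<eta>)*V x \<and> 0 < I x"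
    using Fe1[OF evd] by blast
  define b1 where "b1 = max a b"
  have b1: "ereal b1 < right_end M" using a b unfolding b1_def by (simp add: max_def)
  obtain b0 where b0: "b1 < b0" "ereal b0 < right_end M"
    using eventually_happens'[OF Fnb eventually_conj[OF Fgt[OF b1] Flt]] by blast
  define W where "W y = (1-\<eta>)*V y" for y
  define K where "K = ln (exp ((1-\<eta>)*W b0) + exp 1 * exp (-\<eta>*W b0) / (1 - exp (-(\<eta>/(1-\<eta>)))))"
  define Z where "Z = max ((W b0 + 1)/(1-\<eta>)^2) (K/\<eta>)"
  have "eventually (\<lambda>x. Z \<le> I x) F" using fl unfolding filterlim_at_top by auto
  with Fgt[OF b0(2)] Flt show ?thesis
  proof eventually_elim
    case (elim x)
    have xb: "b < x" "b0 < x" using elim b0 unfolding b1_def by auto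
    have P: "0 < V x" "(1-\<eta>)*V x \<le> I x" "I x \<le> (1+\<eta>)*V x" "0 < I x" using bP[OF xb(1)] elim by auto
    have "(1-\<eta>)*I x \<le> (1-\<eta>)*((1+\<eta>)*V x)" using P \<eta> by (intro mult_left_mono) auto
    also have "\<dots> = V x - \<eta>^2 * V x" by (simp add: algebra_simps power2_eq_square)
    also have "\<dots> \<le> V x" using P by simp
    finally have "(1-\<eta>)*((1-\<eta>)*I x) \<le> (1-\<eta>)*V x" using \<eta> by (intro mult_left_mono) auto
    hence WI: "(1-\<eta>)^2 * I x \<le> W x" unfolding W_def by (simp add: power2_eq_square mult.assoc)
    have "(W b0 + 1)/(1-\<eta>)^2 \<le> I x" using elim unfolding Z_def by simp
    hence "W b0 + 1 \<le> (1-\<eta>)^2 * I x" using \<eta> by (simp add: divide_le_eq mult.commute)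
    hence Wgt: "W b0 < W x" using WI by simp
    have "a < x" using xb b0(1) unfolding b1_def by simp
    hence xS: "x \<in> S" using elim unfolding S_def by simp
    have b0S: "b0 \<in> S" using b0 unfolding S_def b1_def by auto
    obtain r where r: "x < r" "ereal r < right_end M" using ex_between elim by blast
    have rS: "r \<in> S" using r xS unfolding S_def by auto
    obtain \<sigma> where \<sigma>: "\<And>y. y \<in> S \<Longrightarrow> V x + \<sigma>*(y-x) \<le> V y"
      using subgrad[OF conv[folded S_def] xS b0S xb(2) rS r(1)] by blast
    define \<sigma>W where "\<sigma>W = (1-\<eta>)*\<sigma>"
    have subW: "W x + \<sigma>W*(y-x) \<le> W y" if "y \<in> S" for y
    proof -
      have "(1-\<eta>)*(V x + \<sigma>*(y-x)) \<le> (1-\<eta>)*V y" using \<sigma>[OF that] \<eta> by (intro mult_left_mono) auto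
      thus ?thesis unfolding W_def \<sigma>W_def by (simp add: algebra_simps)
    qed
    have "\<sigma>W*(b0-x) < 0" using subW[OF b0S] Wgt by simp
    hence sgW: "\<sigma>W > 0" using xb by (simp add: mult_less_0_iff)
    have low: "ereal ((1-\<eta>)*W x - K) \<le> cramer M x"
      unfolding K_def
    proof (rule lowerB[of b1 W x \<sigma>W b0 \<eta>])
      fix y assume y: "b1 < y" "ereal y < right_end M"
      thus "W x + \<sigma>W*(y-x) \<le> W y" using subW unfolding S_def b1_def by auto
      have "b < y" using y unfolding b1_def by simp
      hence "W y \<le> I y" using bP[of y] y unfolding W_def by simp
      thus "measure M {y..} \<le> exp (- W y)" using I_eq[OF y(2)] by simp
    next
      fix y assume "right_end M \<le> ereal y"
      thus "measure M {y..} = 0" by (rule caseB_beyond[OF fl])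
    qed (use b0 elim sgW \<eta> in auto)
    have KI: "K \<le> \<eta> * I x" using elim \<eta> unfolding Z_def by (simp add: divide_le_eq mult.commute)
    have c3: "1 - e \<le> (1-\<eta>)^3 - \<eta>"
    proof -
      have "(1-\<eta>)^3 - \<eta> - (1 - 4*\<eta>) = \<eta>^2 * (3 - \<eta>)" by (simp add: algebra_simps power2_eq_square power3_eq_cube)
      also have "\<dots> \<ge> 0" using \<eta> by simp
      finally show ?thesis unfolding \<eta>_def by simp
    qed
    have "(1-e)*I x \<le> ((1-\<eta>)^3 - \<eta>) * I x" using c3 P by (intro mult_right_mono) auto
    also have "\<dots> = (1-\<eta>)*((1-\<eta>)^2 * I x) - \<eta> * I x" by (simp add: algebra_simps power2_eq_square power3_eq_cube)
    also have "\<dots> \<le> (1-\<eta>)*W x - K" using WI KI \<eta> by (intro diff_mono mult_left_mono) auto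
    finally have "ereal ((1-e)*I x) \<le> ereal ((1-\<eta>)*W x - K)" by simp
    thus ?case using low by (rule order_trans)
  qed
qed

end


context rm
begin

lemma caseA_fin: assumes nf: "\<not> filterlim I at_top F"
  shows "\<exists>u Z. right_end M = ereal u \<and> (\<forall>x. ereal x < right_end M \<longrightarrow> I x \<le> Z)"
proof -
  obtain Z where Z: "\<not> eventually (\<lambda>x. Z \<le> I x) F" using nf unfolding filterlim_at_top by blast
  have bd: "I x \<le> Z" if x: "ereal x < right_end M" for x
  proof (rule ccontr)
    assume nz: "\<not> I x \<le> Z"
    have "eventually (\<lambda>y. Z \<le> I y) F"
    proof (rule Fe2[OF x])
      fix y assume y: "x < y" "ereal y < right_end M"
      have "I x \<le> I y" using y by (intro I_mono) auto
      thus "Z \<le> I y" using nz by simp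
    qed
    thus False using Z by simp
  qed
  have "right_end M \<noteq> \<infinity>"
  proof
    assume inf: "right_end M = \<infinity>"
    define A where "A n = {real n..}" for n :: nat
    have "(\<lambda>n. measure M (A n)) \<longlonglongrightarrow> measure M (\<Inter>n. A n)"
      by (rule finite_Lim_measure_decseq) (auto simp: A_def decseq_def)
    moreover have "(\<Inter>n. A n) = {}"
    proof -
      have "y \<notin> (\<Inter>n. A n)" for y :: real
      proof -
        obtain n :: nat where n: "y < real n" using reals_Archimedean2 by blast
        have "y \<notin> A n" unfolding A_def using n by simp
        thus ?thesis by blast
      qed
      thus ?thesis by blast
    qed
    ultimately have lim: "(\<lambda>n. measure M (A n)) \<longlonglongrightarrow> 0" by simp
    have "exp (- Z) \<le> measure M (A n)" for n
      using I_eq[of "real n"] bd[of "real n"] inf unfolding A_def by simp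
    hence "exp (- Z) \<le> 0" using LIMSEQ_le_const[OF lim] by blast
    thus False by simp
  qed
  then obtain u where "right_end M = ereal u" using L3 by (cases "right_end M") auto
  thus ?thesis using bd by blast
qed

lemma caseA:
  assumes nf: "\<not> filterlim I at_top F" and evI: "eventually (\<lambda>x. ereal x < right_end M \<and> 0 < I x) F"
    and e: "0 < e"
  shows "eventually (\<lambda>x. 0 < I x \<and> ereal ((1-e)*I x) \<le> cramer M x \<and> cramer M x \<le> ereal ((1+e)*I x)) F"
proof -
  obtain u Z where u: "right_end M = ereal u" and Z: "\<And>x. ereal x < right_end M \<Longrightarrow> I x \<le> Z"
    using caseA_fin[OF nf] by blast
  have Fu: "F = at_left u" using u by (simp add: to_right_end_def)
  obtain c where c: "ereal c < right_end M" "measure M {..c} > 0" "0 < I c" using ex_c[OF evI] by blast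
  have cu: "c < u" using c u by simp
  define I0 where "I0 = I c"
  define q where "q = measure M {u..}"
  define A where "A n = {u - 1/Suc n..}" for n :: nat
  have "(\<lambda>n. measure M (A n)) \<longlonglongrightarrow> measure M (\<Inter>n. A n)"
  proof (rule finite_Lim_measure_decseq)
    show "decseq A" unfolding A_def decseq_def
      by (auto simp: frac_le)
  qed (auto simp: A_def)
  moreover have "(\<Inter>n. A n) = {u..}"
  proof (auto simp: A_def)
    fix y n assume "u \<le> y" thus "u - 1 / (1 + real n) \<le> y"
      by (smt (verit) divide_nonneg_nonneg of_nat_0_le_iff)
  next
    fix y assume h: "\<forall>n. u - 1 / (1 + real n) \<le> y"
    show "u \<le> y"
    proof (rule ccontr)
      assume "\<not> u \<le> y"
      then obtain n where n: "inverse (real (Suc n)) < u - y" using reals_Archimedean[of "u - y"] by auto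
      thus False using h[rule_format, of n] by (simp add: inverse_eq_divide)
    qed
  qed
  ultimately have qlim: "(\<lambda>n. measure M (A n)) \<longlonglongrightarrow> q" unfolding q_def by simp
  have "exp (- Z) \<le> measure M (A n)" for n
  proof -
    have lt: "ereal (u - 1/Suc n) < right_end M" using u by simp
    show ?thesis using I_eq[OF lt] Z[OF lt] unfolding A_def by simp
  qed
  hence "exp (- Z) \<le> q" using LIMSEQ_le_const[OF qlim] by blast
  hence qp: "q > 0" by (meson exp_gt_zero order_less_le_trans)
  have Ile: "I x \<le> - ln q" if "ereal x < right_end M" for x
  proof -
    have "q \<le> measure M {x..}" unfolding q_def using that u by (intro finite_measure_mono) auto
    thus ?thesis using qp unfolding I_def by simp
  qed
  define L where "L = - ln (measure M {..c})"
  have "((\<lambda>x. L*(u-x) - I0*(x-c)) \<longlongrightarrow> L*(u-u) - I0*(u-c)) (at_left u)"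
    by (intro tendsto_intros)
  moreover have "L*(u-u) - I0*(u-c) < 0" using c cu unfolding I0_def by simp
  ultimately have ev1: "eventually (\<lambda>x. L*(u-x) - I0*(x-c) < 0) F"
    unfolding Fu using order_tendstoD(2) by blast
  define \<eta> where "\<eta> = e*I0/3"
  have \<eta>: "\<eta> > 0" unfolding \<eta>_def I0_def using e c by simp
  have "eventually (\<lambda>n. measure M (A n) < q*(1+\<eta>)) sequentially"
    by (rule order_tendstoD(2)[OF qlim]) (use qp \<eta> in simp)
  then obtain n where n: "measure M (A n) < q*(1+\<eta>)" by (auto simp: eventually_sequentially)
  define d where "d = 1/real (Suc n)"
  have d: "d > 0" unfolding d_def by simp
  define t where "t = max 1 (- ln (q*\<eta>)/d)"
  have t: "t > 0" unfolding t_def by simp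
  have "- ln (q*\<eta>)/d \<le> t" unfolding t_def by simp
  hence "(- ln (q*\<eta>)/d)*d \<le> t*d" using d by (intro mult_right_mono) auto
  hence "- ln (q*\<eta>) \<le> t*d" using d by simp
  hence "exp (-t*d) \<le> exp (ln (q*\<eta>))" by simp
  hence etd: "exp (-t*d) \<le> q*\<eta>" using qp \<eta> by simp
  have "mgf t \<le> ennreal (exp (t*u) * (exp (-t*d) + measure M {u-d..}))" by (rule mgf_A[OF u t d])
  also have "\<dots> \<le> ennreal (exp (t*u) * (q*(1+2*\<eta>)))"
  proof (rule ennreal_leI, rule mult_left_mono)
    show "exp (-t*d) + measure M {u-d..} \<le> q*(1+2*\<eta>)"
      using etd n unfolding A_def d_def by (simp add: algebra_simps)
  qed simp
  finally have mg: "mgf t \<le> ennreal (exp (t*u) * (q*(1+2*\<eta>)))" .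
  have "((\<lambda>x. t*(u - x)) \<longlongrightarrow> t*(u-u)) (at_left u)" by (intro tendsto_intros)
  hence ev2: "eventually (\<lambda>x. t*(u - x) < \<eta>) F" unfolding Fu using order_tendstoD(2) \<eta> by fastforce
  show ?thesis using ev1 ev2 Fgt[OF c(1)] Flt
  proof eventually_elim
    case (elim x)
    have I0x: "I0 \<le> I x" unfolding I0_def using elim by (intro I_mono) auto
    have Ipos: "0 < I x" using I0x c unfolding I0_def by simp
    have "cramer M x \<le> ereal (max (I x) I0)"
    proof (rule upper_gen)
      show "0 < measure M {x..}" using L1 elim by simp
      fix t' :: real assume t': "t' < 0"
      have xu: "x < u" using elim u by simp
      have cx: "c < x" using elim by simp
      have ineq: "- ln (measure M {..c}) * (u-x) \<le> I0*(x-c)" using elim(1) unfolding L_def by linarith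
      have I0p: "I0 > 0" using c unfolding I0_def by simp
      show "ereal (t'*x) - log_mgf M t' \<le> ereal I0"
        by (rule upper_A[OF u cx xu c(2) I0p ineq t'])
    qed
    hence "cramer M x \<le> ereal (I x)" using I0x by (simp add: max_def)
    moreover have "ereal (I x) \<le> ereal ((1+e)*I x)" using Ipos e by simp
    ultimately have up: "cramer M x \<le> ereal ((1+e)*I x)" by (rule order_trans)
    have lo1: "ereal (t*x - ln (exp (t*u) * (q*(1+2*\<eta>)))) \<le> cramer M x" by (rule cram_ge[OF mg])
    have "ln (exp (t*u) * (q*(1+2*\<eta>))) = t*u + ln q + ln (1+2*\<eta>)"
      using qp \<eta> by (simp add: ln_mult)
    moreover have "ln (1+2*\<eta>) \<le> 2*\<eta>" using \<eta> by (intro ln_add_one_self_le_self) simp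
    moreover have "t*(u-x) = t*u - t*x" by (simp add: algebra_simps)
    moreover have "t*(u-x) < \<eta>" using elim by simp
    ultimately have "t*x - ln (exp (t*u) * (q*(1+2*\<eta>))) \<ge> - ln q - 3*\<eta>"
      by linarith
    moreover have "(1-e)*I x \<le> - ln q - 3*\<eta>"
    proof -
      have "3*\<eta> = e*I0" unfolding \<eta>_def by simp
      also have "\<dots> \<le> e*I x" using I0x e by simp
      finally have "3*\<eta> \<le> e*I x" .
      moreover have "I x \<le> - ln q" using Ile[of x] elim by simp
      moreover have "(1-e)*I x = I x - e*I x" by (simp add: algebra_simps)
      ultimately show ?thesis by linarith
    qed
    ultimately have "ereal ((1-e)*I x) \<le> ereal (t*x - ln (exp (t*u) * (q*(1+2*\<eta>))))" by simp
    hence "ereal ((1-e)*I x) \<le> cramer M x" using lo1 by (rule order_trans)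
    thus ?case using up Ipos by simp
  qed
qed

lemma dir2:
  assumes a: "ereal a < right_end M"
    and conv: "convex_on {x. ereal a < ereal x \<and> ereal x < right_end M} V"
    and h: "((\<lambda>x. I x / V x) \<longlongrightarrow> 1) F"
  shows "((\<lambda>x. ereal (I x) / cramer M x) \<longlongrightarrow> ereal 1) F"
proof (rule conv_lim)
  fix e :: real assume e: "0 < e" "e < 1"
  have evI: "eventually (\<lambda>x. ereal x < right_end M \<and> 0 < I x) F"
    using ev_IV[OF h, of "1/2"] by (auto elim: eventually_mono)
  show "eventually (\<lambda>x. 0 < I x \<and> ereal ((1-e)*I x) \<le> cramer M x \<and> cramer M x \<le> ereal ((1+e)*I x)) F"
  proof (cases "filterlim I at_top F")
    case True
    obtain c where c: "ereal c < right_end M" "measure M {..c} > 0" using ex_c[OF evI] by blast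
    show ?thesis using caseB_upper[OF True c(2,1)] caseB_lower[OF True a conv h e] evI
    proof eventually_elim
      case (elim x)
      have "ereal (I x) \<le> ereal ((1+e)*I x)" using elim e by simp
      thus ?case using elim by (meson order_trans)
    qed
  next
    case False
    thus ?thesis using caseA[OF False evI e(1)] by simp
  qed
qed

end

theorem theorem1p2:
  fixes M :: "real measure"
  assumes "prob_space M" and "sets M = sets borel"
  shows "((\<lambda>x. ereal (- ln (measure M {x..})) / cramer M x) \<longlongrightarrow> ereal 1)
            (to_right_end (right_end M))
     \<longleftrightarrow> (\<exists>a::real. \<exists>V::real \<Rightarrow> real. ereal a < right_end M \<and>
            convex_on {x. ereal a < ereal x \<and> ereal x < right_end M} V \<and>
            ((\<lambda>x. - ln (measure M {x..}) / V x) \<longlongrightarrow> 1) (to_right_end (right_end M)))"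
proof -
  interpret rm M using assms by (simp add: rm_def rm_axioms_def)
  show ?thesis
    by (simp only: I_def[symmetric]) (use dir1 dir2 in blast)
qed


end
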